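(* Let $X$ be a metric space, $\mathcal M=\{M_1,\dots,M_n\}\subset\mathcal P^f_{\mathrm{Cl}}(X)$, $\Sigma(\mathcal M)\ne\emptyset$ and $d\in\Omega(\mathcal M)$. Then every compact $K\in\Sigma_d(\mathcal M)$ contains (as a subset) at least one element of $\Sigma_d(\mathcal M)$ that is minimal with respect to inclusion in $\Sigma_d(\mathcal M)$.
   Context: For a metric space $X$, $p\in X$, $A\subset X$: $|p\,A|=\inf_{a\in A}|p\,a|$ ($=\infty$ if $A=\emptyset$); for $0\le r<\infty$, $B_r(A)=\{p:|p\,A|\le r\}$. For nonempty $A,B$, $d_H(A,B)=\max\{\sup_{a\in A}|a\,B|,\sup_{b\in B}|b\,A|\}\in[0,\infty]$. $\mathcal P_{\mathrm{Cl}}(X)$ is the set of nonempty closed subsets of $X$ with $d_H$. A finiteness class of $\mathcal P_{\mathrm{Cl}}(X)$ is an equivalence class of the relation $A\sim B\iff d_H(A,B)<\infty$; $\mathcal P^f_{\mathrm{Cl}}(X)$ denotes a fixed finiteness class. For finite $\mathcal M=\{M_1,\dots,M_n\}\subset\mathcal P^f_{\mathrm{Cl}}(X)$, set $S_{\mathcal M}(Y)=\sum_{i=1}^n d_H(Y,M_i)$ for $Y\in\mathcal P^f_{\mathrm{Cl}}(X)$; $\Sigma(\mathcal M)$ is the set of all minimizers of $S_{\mathcal M}$ over $\mathcal P^f_{\mathrm{Cl}}(X)$. For $K\in\Sigma(\mathcal M)$, $d(K)=(d_H(K,M_1),\dots,d_H(K,M_n))$; $\Omega(\mathcal M)=\{d(K):K\in\Sigma(\mathcal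 M)\}$; for $d=(d_1,\dots,d_n)\in\Omega(\mathcal M)$, $\Sigma_d(\mathcal M)=\{K\in\Sigma(\mathcal M):d(K)=d\}$, partially ordered by inclusion. *)

theory Defs
  imports "HOL-Analysis.Analysis"
begin

text \<open>Distance from a point to a set, valued in extended reals (infinite for the empty set).\<close>
definition pt_set_dist :: "'a::metric_space \<Rightarrow> 'a set \<Rightarrow> ereal" where
  "pt_set_dist p A = (INF a\<in>A. ereal (dist p a))"

definition hdist :: "'a::metric_space set \<Rightarrow> 'a set \<Rightarrow> ereal" where
  "hdist A B = max (SUP a\<in>A. pt_set_dist a B) (SUP b\<in>B. pt_set_dist b A)"

definition fin_class :: "'a::metric_space set \<Rightarrow> 'a set set" where
  "fin_class A0 = {Y. Y \<noteq> {} \<and> closed Y \<and> hdist Y A0 < \<infinity>}"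

definition S_sum :: "'a::metric_space set set \<Rightarrow> (nat \<Rightarrow> 'a set) \<Rightarrow> nat \<Rightarrow> 'a set \<Rightarrow> ereal" where
  "S_sum C M n Y = (\<Sum>i<n. hdist Y (M i))"

definition Sigma_min :: "'a::metric_space set set \<Rightarrow> (nat \<Rightarrow> 'a set) \<Rightarrow> nat \<Rightarrow> 'a set set" where
  "Sigma_min C M n = {K \<in> C. \<forall>Y\<in>C. S_sum C M n K \<le> S_sum C M n Y}"

definition dvec :: "(nat \<Rightarrow> 'a::metric_space set) \<Rightarrow> nat \<Rightarrow> 'a set \<Rightarrow> nat \<Rightarrow> ereal" where
  "dvec M n K = (\<lambda>i. if i < n then hdist K (M i) else 0)"

definition Omega :: "'a::metric_space set set \<Rightarrow> (nat \<Rightarrow> 'a set) \<Rightarrow> nat \<Rightarrow> (nat \<Rightarrow> ereal) set" where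
  "Omega C M n = dvec M n ` Sigma_min C M n"

definition Sigma_d :: "'a::metric_space set set \<Rightarrow> (nat \<Rightarrow> 'a set) \<Rightarrow> nat \<Rightarrow> (nat \<Rightarrow> ereal) \<Rightarrow> 'a set set" where
  "Sigma_d C M n d = {K \<in> Sigma_min C M n. dvec M n K = d}"

end

theory Submission
  imports Defs
begin

lemma pt_eq: "A \<noteq> {} \<Longrightarrow> pt_set_dist p A = ereal (infdist p A)"
  unfolding pt_set_dist_def infdist_notempty
  by (subst ereal_Inf') (auto simp: image_comp)

lemma hdist_eq: "A \<noteq> {} \<Longrightarrow> B \<noteq> {} \<Longrightarrow>
  hdist A B = max (SUP a\<in>A. ereal (infdist a B)) (SUP b\<in>B. ereal (infdist b A))"
  unfolding hdist_def by (simp add: pt_eq)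

lemma hdist_nonneg: "A \<noteq> {} \<Longrightarrow> B \<noteq> {} \<Longrightarrow> 0 \<le> hdist A B"
proof -
  assume "A \<noteq> {}" "B \<noteq> {}"
  then obtain a where "a \<in> A" by auto
  then have "0 \<le> (SUP a\<in>A. ereal (infdist a B))"
    by (meson SUP_upper2 ereal_less_eq(5) infdist_nonneg)
  then show ?thesis using \<open>A \<noteq> {}\<close> \<open>B \<noteq> {}\<close> by (simp add: hdist_eq le_max_iff_disj)
qed

lemma hdist_sym: "hdist A B = hdist B A"
  unfolding hdist_def by (simp add: max.commute)

lemma hdist_self: "A \<noteq> {} \<Longrightarrow> hdist A A = 0"
  by (simp add: hdist_eq)

lemma hdist_le_iff: "A \<noteq> {} \<Longrightarrow> B \<noteq> {} \<Longrightarrow>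
  hdist A B \<le> ereal r \<longleftrightarrow> (\<forall>a\<in>A. infdist a B \<le> r) \<and> (\<forall>b\<in>B. infdist b A \<le> r)"
  by (simp add: hdist_eq SUP_le_iff)

lemma infdist_attain:
  assumes "compact X" "X \<noteq> {}"
  obtains x where "x \<in> X" "infdist b X = dist b x"
proof -
  have "continuous_on X (dist b)" by (intro continuous_intros)
  from continuous_attains_inf[OF assms this] obtain x where x: "x \<in> X" "\<forall>y\<in>X. dist b x \<le> dist b y" by auto
  have "infdist b X = dist b x"
    using x assms by (intro antisym infdist_le) (auto simp: infdist_notempty intro!: cINF_greatest)
  then show ?thesis using x that by auto
qed

lemma infdist_sub_diam:
  assumes "L \<subseteq> K" "L \<noteq> {}" "bounded K"
  shows "infdist b L \<le> infdist b K + diameter K"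
proof -
  obtain x0 where x0: "x0 \<in> L" using assms by auto
  have "K \<noteq> {}" using assms by auto
  have "infdist b L - diameter K \<le> infdist b K"
    unfolding infdist_notempty[OF \<open>K \<noteq> {}\<close>]
  proof (rule cINF_greatest)
    fix k assume "k \<in> K"
    have "infdist b L \<le> dist b x0" using x0 by (rule infdist_le)
    also have "\<dots> \<le> dist b k + dist k x0" by (rule dist_triangle)
    also have "dist k x0 \<le> diameter K" using diameter_bounded_bound[OF assms(3) \<open>k\<in>K\<close>] x0 assms(1) by auto
    finally show "infdist b L - diameter K \<le> dist b k" by simp
  qed (use \<open>K \<noteq> {}\<close> in auto)
  then show ?thesis by simp
qed

lemma chain_fip:
  assumes "compact K" "C \<noteq> {}" "\<forall>X\<in>C. closed X \<and> X \<subseteq> K"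
    "\<forall>X\<in>C. \<forall>Y\<in>C. X \<subseteq> Y \<or> Y \<subseteq> X" "closed T" "\<forall>X\<in>C. X \<inter> T \<noteq> {}"
  shows "\<Inter>C \<inter> T \<noteq> {}"
proof -
  have min: "\<exists>X\<in>F. X \<subseteq> \<Inter>F" if "finite F" "F \<noteq> {}" "F \<subseteq> C" for F
    using that
  proof (induction F rule: finite_ne_induct)
    case (singleton x) then show ?case by auto
  next
    case (insert x F)
    then obtain X where "X \<in> F" "X \<subseteq> \<Inter>F" by auto
    then have "X \<subseteq> x \<or> x \<subseteq> X" using insert.prems assms(4) by auto
    then show ?case using \<open>X \<in> F\<close> \<open>X \<subseteq> \<Inter>F\<close> by auto
  qed
  have "K \<inter> (\<Inter>X\<in>C. X \<inter> T) \<noteq> {}"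
  proof (rule compact_imp_fip_image[OF assms(1)])
    fix X assume "X \<in> C" then show "closed (X \<inter> T)" using assms by auto
  next
    fix I' assume I': "finite I'" "I' \<subseteq> C"
    show "K \<inter> (\<Inter>X\<in>I'. X \<inter> T) \<noteq> {}"
    proof (cases "I' = {}")
      case True
      obtain X where "X \<in> C" using assms by auto
      then have "X \<inter> T \<noteq> {}" "X \<subseteq> K" using assms by auto
      then show ?thesis using True by auto
    next
      case False
      from min[OF I'(1) False I'(2)] obtain X where "X \<in> I'" "X \<subseteq> \<Inter>I'" by auto
      have XC: "X \<in> C" using \<open>X \<in> I'\<close> I' by auto
      then obtain y where y: "y \<in> X" "y \<in> T" using assms(6) by auto
      have "X \<subseteq> K" using XC assms(3) by auto
      then have "y \<in> K \<inter> (\<Inter>X\<in>I'. X \<inter> T)" using \<open>X \<subseteq> \<Inter>I'\<close> y by auto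
      then show ?thesis by (metis empty_iff)
    qed
  qed
  then show ?thesis using assms(2) by auto
qed


lemma real_hdist:
  assumes "A \<noteq> {}" "B \<noteq> {}" "hdist A B \<noteq> \<infinity>"
  shows "hdist A B = ereal (real_of_ereal (hdist A B))"
  using hdist_nonneg[OF assms(1,2)] assms(3) by (intro ereal_real'[symmetric]) auto

theorem mainTheorem12:
  fixes A0 :: "'a::metric_space set" and M :: "nat \<Rightarrow> 'a set" and n :: nat
    and d :: "nat \<Rightarrow> ereal" and K :: "'a set"
  assumes "A0 \<noteq> {}" and "closed A0"
    and "\<forall>i<n. M i \<in> fin_class A0"
    and "inj_on M {..<n}"
    and "Sigma_min (fin_class A0) M n \<noteq> {}"
    and "d \<in> Omega (fin_class A0) M n"
    and "compact K" and "K \<in> Sigma_d (fin_class A0) M n d"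
  shows "\<exists>K'\<in>Sigma_d (fin_class A0) M n d. K' \<subseteq> K \<and>
           (\<forall>K''\<in>Sigma_d (fin_class A0) M n d. K'' \<subseteq> K' \<longrightarrow> K'' = K')"
proof -
  define C where "C = fin_class A0"
  define S where "S = S_sum C M n"
  have KC: "K \<in> C" and Kmin: "\<forall>Y\<in>C. S K \<le> S Y" and dK: "dvec M n K = d"
    using assms(8) unfolding Sigma_d_def Sigma_min_def C_def S_def by auto
  have Kne: "K \<noteq> {}" and Kcl: "closed K" and KA0: "hdist K A0 < \<infinity>"
    using KC unfolding C_def fin_class_def by auto
  have A0C: "A0 \<in> C" using assms(1,2) hdist_self[OF assms(1)] unfolding C_def fin_class_def by auto
  have Mne: "M i \<noteq> {}" and MA0: "hdist (M i) A0 < \<infinity>" if "i < n" for i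
    using assms(3) that unfolding fin_class_def by auto
  have SA0: "S A0 \<noteq> \<infinity>"
    unfolding S_def S_sum_def sum_Pinfty using MA0 hdist_sym[of A0] by auto
  have fin: "hdist K (M i) \<noteq> \<infinity>" if "i < n" for i
  proof
    assume "hdist K (M i) = \<infinity>"
    then have "S K = \<infinity>" unfolding S_def S_sum_def sum_Pinfty using that by auto
    with Kmin A0C SA0 show False by force
  qed
  define r where "r i = real_of_ereal (hdist K (M i))" for i
  have hr: "hdist K (M i) = ereal (r i)" if "i < n" for i
    unfolding r_def using real_hdist[OF Kne Mne[OF that] fin[OF that]] .
  have dr: "d i = ereal (r i)" if "i < n" for i
    using hr[OF that] dK that unfolding dvec_def by auto
  have SK: "S K = ereal (\<Sum>i<n. r i)"
    unfolding S_def S_sum_def by (simp add: hr)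
  have bK: "bounded K" using assms(7) by (rule compact_imp_bounded)
  have key: "L \<in> Sigma_d C M n d"
    if Lne: "L \<noteq> {}" and Lcl: "closed L" and LK: "L \<subseteq> K"
      and Lle: "\<forall>i<n. hdist L (M i) \<le> ereal (r i)" for L
  proof -
    have KA0': "hdist K A0 = ereal (real_of_ereal (hdist K A0))"
      using real_hdist[OF Kne assms(1)] KA0 by auto
    define c where "c = real_of_ereal (hdist K A0)"
    have c1: "\<forall>a\<in>K. infdist a A0 \<le> c" and c2: "\<forall>b\<in>A0. infdist b K \<le> c"
      using hdist_le_iff[OF Kne assms(1), of c] KA0' unfolding c_def by auto
    have "hdist L A0 \<le> ereal (c + diameter K)"
      unfolding hdist_le_iff[OF Lne assms(1)]
    proof safe
      fix a assume "a \<in> L"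
      then show "infdist a A0 \<le> c + diameter K" using c1 LK diameter_ge_0[OF bK] by force
    next
      fix b assume "b \<in> A0"
      then show "infdist b L \<le> c + diameter K"
        using c2 infdist_sub_diam[OF LK Lne bK, of b] by force
    qed
    then have LC: "L \<in> C" unfolding C_def fin_class_def using Lne Lcl by auto
    define s where "s i = real_of_ereal (hdist L (M i))" for i
    have hs: "hdist L (M i) = ereal (s i)" if "i < n" for i
      unfolding s_def using Lle that hdist_nonneg[OF Lne Mne[OF that]]
      by (intro ereal_real'[symmetric]) auto
    have sr: "s i \<le> r i" if "i < n" for i using Lle hs that by fastforce
    have SL: "S L = ereal (\<Sum>i<n. s i)"
      unfolding S_def S_sum_def by (simp add: hs)
    have "(\<Sum>i<n. r i) \<le> (\<Sum>i<n. s i)" using Kmin LC SK SL by force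
    have seq: "s i = r i" if "i < n" for i
    proof (rule ccontr)
      assume "s i \<noteq> r i"
      then have "s i < r i" using sr[OF that] by auto
      then have "(\<Sum>i<n. s i) < (\<Sum>i<n. r i)"
        using sr that by (intro sum_strict_mono_ex1) auto
      with \<open>(\<Sum>i<n. r i) \<le> (\<Sum>i<n. s i)\<close> show False by auto
    qed
    have "dvec M n L = d"
    proof
      fix i
      have "d i = (if i < n then hdist K (M i) else 0)" using dK unfolding dvec_def by auto
      then show "dvec M n L i = d i"
        using hs seq dr unfolding dvec_def by (cases "i < n") auto
    qed
    moreover have "(\<Sum>i<n. s i) = (\<Sum>i<n. r i)" using seq by (intro sum.cong) auto
    then have "S L = S K" using SK SL by simp
    then have "\<forall>Y\<in>C. S L \<le> S Y" using Kmin by simp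
    ultimately show ?thesis using LC unfolding Sigma_d_def Sigma_min_def S_def by auto
  qed
  define F where "F = {L \<in> Sigma_d C M n d. L \<subseteq> K}"
  have Fprops: "L \<noteq> {} \<and> closed L \<and> L \<subseteq> K \<and> compact L \<and> (\<forall>i<n. hdist L (M i) = ereal (r i))"
    if "L \<in> F" for L
  proof -
    have "L \<in> C" "dvec M n L = d" "L \<subseteq> K" using that unfolding F_def Sigma_d_def Sigma_min_def by auto
    then have "L \<noteq> {}" "closed L" unfolding C_def fin_class_def by auto
    moreover have "compact L" using compact_Int_closed[OF assms(7) \<open>closed L\<close>] \<open>L \<subseteq> K\<close>
      by (simp add: Int_absorb1)
    moreover have "\<forall>i<n. hdist L (M i) = ereal (r i)"
    proof safe
      fix i assume "i < n"
      have "d i = (if i < n then hdist L (M i) else 0)" using \<open>dvec M n L = d\<close> unfolding dvec_def by auto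
      then show "hdist L (M i) = ereal (r i)" using dr[OF \<open>i < n\<close>] \<open>i < n\<close> by simp
    qed
    ultimately show ?thesis using \<open>L \<subseteq> K\<close> by auto
  qed
  have KF: "K \<in> F" unfolding F_def using assms(8) C_def by auto
  have chain_lb: "\<exists>L\<in>F. \<forall>Y\<in>Ch. L \<subseteq> Y"
    if ChF: "Ch \<subseteq> F" and chain: "\<forall>X\<in>Ch. \<forall>Y\<in>Ch. X \<subseteq> Y \<or> Y \<subseteq> X" for Ch
  proof (cases "Ch = {}")
    case True then show ?thesis using KF by auto
  next
    case False
    have sub: "\<forall>X\<in>Ch. closed X \<and> X \<subseteq> K" using ChF Fprops by blast
    have Lne: "\<Inter>Ch \<noteq> {}"
      using chain_fip[OF assms(7) False sub chain, of UNIV] ChF Fprops by auto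
    have Lcl: "closed (\<Inter>Ch)" using sub by auto
    have LK: "\<Inter>Ch \<subseteq> K" using sub False by auto
    have "\<forall>i<n. hdist (\<Inter>Ch) (M i) \<le> ereal (r i)"
    proof safe
      fix i assume i: "i < n"
      have Y: "\<forall>a\<in>Y. infdist a (M i) \<le> r i" "\<forall>b\<in>M i. infdist b Y \<le> r i" if "Y \<in> Ch" for Y
        using that ChF Fprops[of Y] hdist_le_iff[of Y "M i" "r i"] Mne[OF i] i by auto
      show "hdist (\<Inter>Ch) (M i) \<le> ereal (r i)"
        unfolding hdist_le_iff[OF Lne Mne[OF i]]
      proof safe
        fix a assume "a \<in> \<Inter>Ch"
        then show "infdist a (M i) \<le> r i" using Y(1) False by auto
      next
        fix b assume b: "b \<in> M i"
        have "\<forall>X\<in>Ch. X \<inter> cball b (r i) \<noteq> {}"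
        proof
          fix X assume X: "X \<in> Ch"
          then have "compact X" "X \<noteq> {}" using ChF Fprops by auto
          then obtain x where "x \<in> X" "infdist b X = dist b x" by (rule infdist_attain)
          then have "x \<in> X \<inter> cball b (r i)" using Y(2)[OF X] b by (auto simp: mem_cball)
          then show "X \<inter> cball b (r i) \<noteq> {}" by (metis empty_iff)
        qed
        from chain_fip[OF assms(7) False sub chain _ this]
        obtain y where "y \<in> \<Inter>Ch" "dist b y \<le> r i" by auto
        then show "infdist b (\<Inter>Ch) \<le> r i" by (intro infdist_le2)
      qed
    qed
    then have "\<Inter>Ch \<in> F" using key[OF Lne Lcl LK] LK unfolding F_def by auto
    then show ?thesis by auto
  qed
  have "\<exists>U\<in>uminus ` F. \<forall>X\<in>Ch. X \<subseteq> U" if "Ch \<in> chains (uminus ` F)" for Ch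
  proof -
    have "Ch \<subseteq> uminus ` F" using that by (rule chainsD2)
    then have "uminus ` Ch \<subseteq> F" by auto
    moreover have "\<forall>X\<in>uminus ` Ch. \<forall>Y\<in>uminus ` Ch. X \<subseteq> Y \<or> Y \<subseteq> X"
      using chainsD[OF that] by blast
    ultimately obtain L where "L \<in> F" "\<forall>Y\<in>uminus ` Ch. L \<subseteq> Y" using chain_lb by meson
    then have "\<forall>X\<in>Ch. X \<subseteq> - L" by auto
    then show ?thesis using \<open>L \<in> F\<close> by auto
  qed
  then have "\<forall>Ch\<in>chains (uminus ` F). \<exists>U\<in>uminus ` F. \<forall>X\<in>Ch. X \<subseteq> U" by blast
  from Zorn_Lemma2[OF this] obtain Mx where Mx: "Mx \<in> uminus ` F" "\<forall>X\<in>uminus ` F. Mx \<subseteq> X \<longrightarrow> X = Mx"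
    by blast
  then obtain K' where K': "K' \<in> F" "Mx = - K'" by auto
  have "\<forall>K''\<in>Sigma_d C M n d. K'' \<subseteq> K' \<longrightarrow> K'' = K'"
  proof (intro ballI impI)
    fix K'' assume "K'' \<in> Sigma_d C M n d" "K'' \<subseteq> K'"
    then have "K'' \<in> F" using K' unfolding F_def by auto
    then have "- K'' \<in> uminus ` F" by auto
    moreover have "Mx \<subseteq> - K''" using K'(2) \<open>K'' \<subseteq> K'\<close> by auto
    ultimately have "- K'' = - K'" using Mx(2) K'(2) by auto
    then show "K'' = K'" by auto
  qed
  then show ?thesis using K' unfolding F_def C_def by auto
qed

end
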